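(* Consider the algorithm $\mathcal{S}$-DC on the half-line $[0,\infty)$ with source $0$ and speeds $(s_i)_{i\ge2}$. Let $x_1\ge x_2\ge\dots$ be the positions of its servers after serving a sequence of requests (with $x_i$ the $i$-th server from the right, servers at the source having position $0$). Then the total cost paid by $\mathcal{S}$-DC is $\sum_{i=1}^\infty z_i x_i$, where $z_1=1$ and $z_i=\frac{z_{i-1}}{s_i}+1+\frac{1}{s_i}$ for $i\ge2$.
   Context: Infinite server problem on the half-line $[0,\infty)$ with source $0$: an unbounded number of servers initially reside at $0$; requests (points of $[0,\infty)$) are revealed one by one and must be served immediately by moving a server to the request; the cost is the total distance traveled. Let $\mathcal{S}=\{s_i\ge1 : i\in\mathbb{N}, i\ge2\}$ be given by a monotonic (non-decreasing or non-increasing) sequence of speeds $s_i\ge1$. Denote by $x_i$ the $i$-th server from the right (also its position). Algorithm $\mathcal{S}$-DC: if a request lies between servers $x_{i+1}$ (to its left) and $x_i$ (to its right), move $x_{i+1}$ and $x_i$ towards it with speeds $s_{i+1}$ and $1$ respectively until one of them reaches it; if there is no server to the right of the request, move the rightmost server to the request. (With all $s_i=1$ this is the Double Coverage algorithm.) *)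

theory Defs
  imports Complex_Main
begin

text \<open>A configuration is a function x :: nat => real; x i (for i >= 1) is the position of the
 i-th server from the right. Index 0 is unused. Initially all servers are at the source 0.
 s i (i >= 2) are the speeds.\<close>

definition dc_step :: "(nat \<Rightarrow> real) \<Rightarrow> (nat \<Rightarrow> real) \<Rightarrow> real \<Rightarrow> (nat \<Rightarrow> real) \<times> real" where
  "dc_step s x r =
    (if x 1 \<le> r then (x(1 := r), r - x 1)
     else if (\<exists>i\<ge>1. x i = r) then (x, 0)
     else (let i = (THE i. 1 \<le> i \<and> x (Suc i) < r \<and> r < x i);
               t = min (x i - r) ((r - x (Suc i)) / s (Suc i))
           in (x(i := x i - t, Suc i := x (Suc i) + s (Suc i) * t), t + s (Suc i) * t)))"

definition dc_run :: "(nat \<Rightarrow> real) \<Rightarrow> real list \<Rightarrow> (nat \<Rightarrow> real) \<times> real" where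
  "dc_run s rs = foldl (\<lambda>(x, c) r. let (x', c') = dc_step s x r in (x', c + c')) ((\<lambda>_. 0), 0) rs"

fun zc :: "(nat \<Rightarrow> real) \<Rightarrow> nat \<Rightarrow> real" where
  "zc s 0 = 0"
| "zc s (Suc 0) = 1"
| "zc s (Suc (Suc i)) = zc s (Suc i) / s (Suc (Suc i)) + 1 + 1 / s (Suc (Suc i))"

end

theory Submission
  imports Defs
begin

definition inv_dc :: "(nat \<Rightarrow> real) \<Rightarrow> bool" where
  "inv_dc x \<longleftrightarrow> x 0 = 0 \<and> (\<forall>i\<ge>1. x (Suc i) \<le> x i) \<and> (\<exists>N. \<forall>j\<ge>N. x j = 0)"

definition phi :: "(nat \<Rightarrow> real) \<Rightarrow> (nat \<Rightarrow> real) \<Rightarrow> real" where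
  "phi s x = (\<Sum>i. zc s (Suc i) * x (Suc i))"

lemma sorted_le:
  assumes "\<forall>i\<ge>1. x (Suc i) \<le> (x i :: real)" "1 \<le> i" "i \<le> j"
  shows "x j \<le> x i"
  using assms(3)
proof (induction j rule: dec_induct)
  case base then show ?case by simp
next
  case (step m) then show ?case using assms(1,2) by (meson dual_order.trans le_trans)
qed

lemma phi_fin:
  assumes "x 0 = 0" "\<forall>j\<ge>N. x j = 0"
  shows "phi s x = (\<Sum>k<N. zc s k * x k)"
proof -
  have "phi s x = (\<Sum>i<N. zc s (Suc i) * x (Suc i))"
    unfolding phi_def
    by (rule suminf_finite) (use assms in auto)
  also have "\<dots> = (\<Sum>k<Suc N. zc s k * x k)"
    by (subst sum.lessThan_Suc_shift) simp
  also have "\<dots> = (\<Sum>k<N. zc s k * x k)"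
    using assms by simp
  finally show ?thesis .
qed

lemma sum_upd:
  fixes c f :: "nat \<Rightarrow> real"
  assumes "finite A" "k \<in> A"
  shows "(\<Sum>j\<in>A. c j * (f(k:=v)) j) = (\<Sum>j\<in>A. c j * f j) + c k * (v - f k)"
proof -
  have "(\<Sum>j\<in>A. c j * (f(k:=v)) j) = c k * v + (\<Sum>j\<in>A-{k}. c j * (f(k:=v)) j)"
    using assms by (simp add: sum.remove)
  also have "(\<Sum>j\<in>A-{k}. c j * (f(k:=v)) j) = (\<Sum>j\<in>A-{k}. c j * f j)"
    by (rule sum.cong) auto
  also have "(\<Sum>j\<in>A. c j * f j) = c k * f k + (\<Sum>j\<in>A-{k}. c j * f j)"
    using assms by (simp add: sum.remove)
  moreover have "c k * (v - f k) = c k * v - c k * f k" by (simp add: right_diff_distrib)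
  ultimately show ?thesis by linarith
qed

lemma step_ok:
  assumes speeds: "\<forall>i\<ge>2. s i \<ge> (1::real)" and inv: "inv_dc x" and r: "r \<ge> 0"
  shows "inv_dc (fst (dc_step s x r)) \<and> phi s (fst (dc_step s x r)) = phi s x + snd (dc_step s x r)"
proof -
  from inv have x0: "x 0 = 0" and srt: "\<forall>i\<ge>1. x (Suc i) \<le> x i"
    and "\<exists>N. \<forall>j\<ge>N. x j = 0" unfolding inv_dc_def by auto
  then obtain N where N: "\<forall>j\<ge>N. x j = 0" by blast
  show ?thesis
  proof (cases "x 1 \<le> r")
    case True
    let ?x' = "x(1 := r)"
    have st: "dc_step s x r = (?x', r - x 1)" using True by (simp add: dc_step_def)
    have inv': "inv_dc ?x'"
      unfolding inv_dc_def
    proof (intro conjI)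
      show "\<forall>i\<ge>1. ?x' (Suc i) \<le> ?x' i"
        using srt True by auto
      show "\<exists>N. \<forall>j\<ge>N. ?x' j = 0" using N by (intro exI[of _ "max N 2"]) auto
    qed (use x0 in simp)
    let ?M = "max N 2"
    have N2: "\<forall>j\<ge>?M. x j = 0" "\<forall>j\<ge>?M. ?x' j = 0" using N by auto
    have "phi s ?x' = (\<Sum>k<?M. zc s k * ?x' k)" by (rule phi_fin) (use x0 N2 in auto)
    also have "\<dots> = (\<Sum>k<?M. zc s k * x k) + zc s 1 * (r - x 1)"
      by (rule sum_upd) auto
    also have "(\<Sum>k<?M. zc s k * x k) = phi s x" by (rule phi_fin[symmetric]) (use x0 N2 in auto)
    finally have P: "phi s ?x' = phi s x + zc s 1 * (r - x 1)" .
    have z1: "zc s 1 = 1" by simp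
    show ?thesis using st inv' P z1 by (metis fst_conv snd_conv mult_1)
  next
    case False
    show ?thesis
    proof (cases "\<exists>i\<ge>1. x i = r")
      case True
      then have "dc_step s x r = (x, 0)" using False by (simp add: dc_step_def)
      then show ?thesis using inv by simp
    next
      case ne: False
      have ex: "\<exists>j. 1 \<le> j \<and> x j < r"
        using N ne r by (intro exI[of _ "max N 1"]) (metis max.cobounded1 max.cobounded2 less_eq_real_def)
      define j where "j = (LEAST j. 1 \<le> j \<and> x j < r)"
      have j: "1 \<le> j \<and> x j < r" unfolding j_def by (rule LeastI_ex[OF ex])
      have jmin: "\<And>k. 1 \<le> k \<Longrightarrow> x k < r \<Longrightarrow> j \<le> k" unfolding j_def by (rule Least_le) simp
      have "j \<noteq> 1" using j False by auto
      then obtain i where ij: "j = Suc i" and i1: "1 \<le> i" using j by (cases j) auto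
      have xi: "r < x i"
      proof -
        have "\<not> x i < r" using jmin[of i] i1 ij by fastforce
        moreover have "x i \<noteq> r" using ne i1 by auto
        ultimately show ?thesis by simp
      qed
      have xsi: "x (Suc i) < r" using j ij by simp
      have the: "(THE i. 1 \<le> i \<and> x (Suc i) < r \<and> r < x i) = i"
      proof (rule the_equality)
        show "1 \<le> i \<and> x (Suc i) < r \<and> r < x i" using i1 xi xsi by simp
      next
        fix i' assume h: "1 \<le> i' \<and> x (Suc i') < r \<and> r < x i'"
        show "i' = i"
        proof (rule ccontr)
          assume "i' \<noteq> i"
          then consider "Suc i \<le> i'" | "Suc i' \<le> i" by linarith
          then show False
          proof cases
            case 1 then have "x i' \<le> x (Suc i)" using sorted_le[OF srt] by simp
            then show False using h xsi by simp
          next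
            case 2 then have "x i \<le> x (Suc i')" using sorted_le[OF srt] by simp
            then show False using h xi by simp
          qed
        qed
      qed
      define sp where "sp = s (Suc i)"
      have sp1: "sp \<ge> 1" using speeds i1 unfolding sp_def by simp
      define t where "t = min (x i - r) ((r - x (Suc i)) / sp)"
      have t0: "t \<ge> 0" using xi xsi sp1 unfolding t_def by simp
      have t1: "t \<le> x i - r" unfolding t_def by simp
      have t2: "sp * t \<le> r - x (Suc i)"
      proof -
        have "t \<le> (r - x (Suc i)) / sp" unfolding t_def by simp
        then show ?thesis using sp1 by (simp add: field_simps)
      qed
      let ?x' = "x(i := x i - t, Suc i := x (Suc i) + sp * t)"
      have st: "dc_step s x r = (?x', t + sp * t)"
        using False ne the by (auto simp add: dc_step_def Let_def t_def sp_def)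
      have a1: "?x' i \<le> x i" "?x' (Suc i) \<ge> x (Suc i)" "?x' (Suc i) \<le> ?x' i"
        using t0 t1 t2 sp1 by auto
      have srt': "\<forall>k\<ge>1. ?x' (Suc k) \<le> ?x' k"
      proof (intro allI impI)
        fix k :: nat assume k1: "1 \<le> k"
        show "?x' (Suc k) \<le> ?x' k"
        proof -
          consider "Suc k = i" | "k = i" | "k = Suc i" | "Suc k \<noteq> i \<and> k \<noteq> i \<and> k \<noteq> Suc i" by blast
          then show ?thesis
          proof cases
            case 1
            then have "x i \<le> x k" using srt k1 by auto
            then show ?thesis using 1 a1 by auto
          next
            case 2 then show ?thesis using a1 by simp
          next
            case 3
            then have "x (Suc (Suc i)) \<le> x (Suc i)" using srt by simp
            then show ?thesis using 3 a1 by simp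
          next
            case 4 then show ?thesis using srt k1 by auto
          qed
        qed
      qed
      let ?M = "max N (Suc (Suc i))"
      have N2: "\<forall>j\<ge>?M. x j = 0" "\<forall>j\<ge>?M. ?x' j = 0" using N by auto
      have inv': "inv_dc ?x'" unfolding inv_dc_def
      proof (intro conjI)
        show "?x' 0 = 0" using x0 i1 by simp
        show "\<exists>N. \<forall>j\<ge>N. ?x' j = 0" using N2(2) by blast
      qed (use srt' in blast)
      have "phi s ?x' = (\<Sum>k<?M. zc s k * ?x' k)" by (rule phi_fin) (use x0 N2 i1 in auto)
      also have "\<dots> = (\<Sum>k<?M. zc s k * (x(i := x i - t)) k) + zc s (Suc i) * (x (Suc i) + sp * t - (x(i := x i - t)) (Suc i))"
        by (rule sum_upd) auto
      also have "(\<Sum>k<?M. zc s k * (x(i := x i - t)) k) = (\<Sum>k<?M. zc s k * x k) + zc s i * (x i - t - x i)"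
        by (rule sum_upd) auto
      also have "(\<Sum>k<?M. zc s k * x k) = phi s x" by (rule phi_fin[symmetric]) (use x0 N2 in auto)
      finally have P0: "phi s ?x' = phi s x + zc s i * (x i - t - x i) + zc s (Suc i) * (x (Suc i) + sp * t - (x(i := x i - t)) (Suc i))" .
      have e: "(x(i := x i - t)) (Suc i) = x (Suc i)" by simp
      have ar: "zc s i * (x i - t - x i) + zc s (Suc i) * (x (Suc i) + sp * t - x (Suc i)) = zc s (Suc i) * sp * t - zc s i * t"
        by (simp add: algebra_simps)
      have P: "phi s ?x' = phi s x + (zc s (Suc i) * sp * t - zc s i * t)"
        using P0 ar unfolding e by linarith
      obtain m where im: "i = Suc m" using i1 by (cases i) auto
      have "zc s (Suc i) * sp = zc s i + sp + 1"
        using sp1 im by (simp add: sp_def field_simps)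
      then have "zc s (Suc i) * sp * t - zc s i * t = t + sp * t" by (simp add: algebra_simps)
      then show ?thesis using P st inv' by simp
    qed
  qed
qed

lemma run_ok:
  assumes speeds: "\<forall>i\<ge>2. s i \<ge> (1::real)" and reqs: "\<forall>r\<in>set rs. r \<ge> 0"
  shows "inv_dc (fst (dc_run s rs)) \<and> snd (dc_run s rs) = phi s (fst (dc_run s rs))"
  using reqs
proof (induction rs rule: rev_induct)
  case Nil
  have "phi s (\<lambda>_. 0) = 0" unfolding phi_def by simp
  then show ?case by (simp add: dc_run_def inv_dc_def)
next
  case (snoc r rs)
  obtain x c where xc: "dc_run s rs = (x, c)" by fastforce
  have IH: "inv_dc x \<and> c = phi s x" using snoc xc by simp
  obtain x' c' where xc': "dc_step s x r = (x', c')" by fastforce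
  have run: "dc_run s (rs @ [r]) = (x', c + c')"
    using xc xc' unfolding dc_run_def by simp
  have "inv_dc x' \<and> phi s x' = phi s x + c'"
    using step_ok[OF speeds, of x r] IH xc' snoc.prems by simp
  then show ?case using run IH by simp
qed

theorem lemma1:
  fixes s :: "nat \<Rightarrow> real" and rs :: "real list"
  assumes speeds: "\<forall>i\<ge>2. s i \<ge> 1"
    and mono: "monotone_on {2..} (\<le>) (\<le>) s \<or> monotone_on {2..} (\<le>) (\<ge>) s"
    and reqs: "\<forall>r\<in>set rs. r \<ge> 0"
  shows "snd (dc_run s rs) = (\<Sum>i. zc s (Suc i) * fst (dc_run s rs) (Suc i))"
  using run_ok[OF speeds reqs] unfolding phi_def by simp

end
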